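(* Let $\mathcal{A}$ be a unital algebra over a field $F$ with $\operatorname{char}(F)\neq 2$. Then: (a) if $Z_J(\mathcal{A})=Z(\mathcal{A})$, then $\operatorname{JCent}(\mathcal{A})=\operatorname{Cent}(\mathcal{A})$; (b) if $Z_Q(\mathcal{A})=Z(\mathcal{A})$, then $\operatorname{QJCent}(\mathcal{A})=\operatorname{Cent}(\mathcal{A})$; (c) if $Z_Q(\mathcal{A})=Z_J(\mathcal{A})$, then $\operatorname{QJCent}(\mathcal{A})=\operatorname{JCent}(\mathcal{A})$.
   Context: $x\circ y=xy+yx$, $[x,y]=xy-yx$. $Z(\mathcal{A})$ is the center. $Z_J(\mathcal{A})=\{a: [[a,x],y]=0\ \forall x,y\in\mathcal{A}\}$, $Z_Q(\mathcal{A})=\{a: [a,[x,y]]=0\ \forall x,y\in\mathcal{A}\}$. $\operatorname{Cent}(\mathcal{A})$: linear $f:\mathcal{A}\to\mathcal{A}$ with $f(xy)=f(x)y=xf(y)$ for all $x,y$. $\operatorname{JCent}(\mathcal{A})$: linear $f$ with $f(x\circ y)=f(x)\circ y$ for all $x,y$. $\operatorname{QJCent}(\mathcal{A})$: linear $f$ with $f(x)\circ y=x\circ f(y)$ for all $x,y$. *)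

theory Defs
  imports Complex_Main
begin

definition unital_algebra :: "('k::field \<Rightarrow> 'a::ring_1 \<Rightarrow> 'a) \<Rightarrow> bool" where
  "unital_algebra smult \<longleftrightarrow> vector_space smult \<and>
     (\<forall>c x y. smult c (x * y) = smult c x * y \<and> smult c (x * y) = x * smult c y)"

definition jprod :: "'a::ring \<Rightarrow> 'a \<Rightarrow> 'a" where
  "jprod x y = x * y + y * x"

definition comm :: "'a::ring \<Rightarrow> 'a \<Rightarrow> 'a" where
  "comm x y = x * y - y * x"

definition center :: "'a::ring set" where
  "center = {a. \<forall>x. comm a x = 0}"

definition ZJ :: "'a::ring set" where
  "ZJ = {a. \<forall>x y. comm (comm a x) y = 0}"

definition ZQ :: "'a::ring set" where
  "ZQ = {a. \<forall>x y. comm a (comm x y) = 0}"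

definition Cent :: "('k::field \<Rightarrow> 'a::ring_1 \<Rightarrow> 'a) \<Rightarrow> ('a \<Rightarrow> 'a) set" where
  "Cent smult = {f. Vector_Spaces.linear smult smult f \<and>
      (\<forall>x y. f (x * y) = f x * y \<and> f (x * y) = x * f y)}"

definition JCent :: "('k::field \<Rightarrow> 'a::ring_1 \<Rightarrow> 'a) \<Rightarrow> ('a \<Rightarrow> 'a) set" where
  "JCent smult = {f. Vector_Spaces.linear smult smult f \<and>
      (\<forall>x y. f (jprod x y) = jprod (f x) y)}"

definition QJCent :: "('k::field \<Rightarrow> 'a::ring_1 \<Rightarrow> 'a) \<Rightarrow> ('a \<Rightarrow> 'a) set" where
  "QJCent smult = {f. Vector_Spaces.linear smult smult f \<and>
      (\<forall>x y. jprod (f x) y = jprod x (f y))}"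

end

theory Submission
  imports Defs
begin

lemma tf:
  fixes smult :: "'k::field \<Rightarrow> 'a::ring_1 \<Rightarrow> 'a"
  assumes "unital_algebra smult" and "(2::'k) \<noteq> 0" and "x + x = (0::'a)"
  shows "x = 0"
proof -
  have vs: "vector_space smult" using assms(1) unfolding unital_algebra_def by blast
  interpret vector_space smult by (rule vs)
  have "smult 2 x = x + x" using scale_left_distrib[of 1 1 x] by (simp add: one_add_one)
  hence "smult 2 x = 0" using assms(3) by (simp only:)
  thus ?thesis using assms(2) by simp
qed

lemma tf2:
  fixes smult :: "'k::field \<Rightarrow> 'a::ring_1 \<Rightarrow> 'a"
  assumes "unital_algebra smult" and "(2::'k) \<noteq> 0" and "x + x = y + (y::'a)"
  shows "x = y"
proof -
  have "(x - y) + (x - y) = 0" using assms(3) by (simp add: algebra_simps)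
  hence "x - y = 0" using tf[OF assms(1,2)] by blast
  thus ?thesis by simp
qed

lemma linadd:
  fixes s :: "'k::field \<Rightarrow> 'a::ring_1 \<Rightarrow> 'a"
  shows "Vector_Spaces.linear s s f \<Longrightarrow> f (x + y) = f x + f y"
  unfolding Vector_Spaces.linear_iff by blast

lemma cent_sub_J: "Cent smult \<subseteq> JCent smult"
proof
  fix f assume "f \<in> Cent smult"
  hence l: "Vector_Spaces.linear smult smult f" and m: "\<And>x y. f (x * y) = f x * y \<and> f (x * y) = x * f y"
    unfolding Cent_def by blast+
  have "f (x*y + y*x) = f x * y + y * f x" for x y
    using linadd[OF l, of "x*y" "y*x"] m[of x y] m[of y x] by metis
  thus "f \<in> JCent smult" unfolding JCent_def jprod_def using l by auto
qed

lemma cent_sub_Q: "Cent smult \<subseteq> QJCent smult"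
proof
  fix f assume "f \<in> Cent smult"
  hence l: "Vector_Spaces.linear smult smult f" and m: "\<And>x y. f (x * y) = f x * y \<and> f (x * y) = x * f y"
    unfolding Cent_def by blast+
  have "f x * y + y * f x = x * f y + f y * x" for x y
    using m[of x y] m[of y x] by (metis add.commute)
  thus "f \<in> QJCent smult" unfolding QJCent_def jprod_def using l by auto
qed

lemma J_basic:
  assumes "f \<in> JCent smult"
  shows "f z + f z = f 1 * z + z * f 1" and "f 1 \<in> ZJ"
proof -
  have l: "Vector_Spaces.linear smult smult f" and m: "\<And>x y. f (jprod x y) = jprod (f x) y"
    using assms unfolding JCent_def by auto
  have d: "f w + f w = f 1 * w + w * f 1" for w
    using m[of 1 w] linadd[OF l, of w w] unfolding jprod_def by simp
  thus "f z + f z = f 1 * z + z * f 1" .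
  show "f 1 \<in> ZJ" unfolding ZJ_def
  proof (intro CollectI allI)
    fix y x
    let ?a = "f 1"
    have "f (jprod x y) + f (jprod x y) = jprod (f x + f x) y"
      using m[of x y] by (simp add: jprod_def algebra_simps)
    hence E: "?a * (x*y+y*x) + (x*y+y*x) * ?a = (?a*x+x*?a)*y + y*(?a*x+x*?a)"
      using d[of "jprod x y"] d[of x] by (simp add: jprod_def)
    have "comm (comm ?a y) x = ?a * (x*y+y*x) + (x*y+y*x) * ?a - ((?a*x+x*?a)*y + y*(?a*x+x*?a))"
      by (simp add: comm_def algebra_simps)
    thus "comm (comm ?a y) x = 0" using E by simp
  qed
qed

lemma Q_basic:
  assumes "f \<in> QJCent smult"
  shows "f z + f z = f 1 * z + z * f 1" and "f 1 \<in> ZQ"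
proof -
  have l: "Vector_Spaces.linear smult smult f" and m: "\<And>x y. jprod (f x) y = jprod x (f y)"
    using assms unfolding QJCent_def by auto
  have d: "f w + f w = f 1 * w + w * f 1" for w
    using m[of w 1] unfolding jprod_def by (simp add: add.commute)
  thus "f z + f z = f 1 * z + z * f 1" .
  show "f 1 \<in> ZQ" unfolding ZQ_def
  proof (intro CollectI allI)
    fix x y
    let ?a = "f 1"
    have "jprod (f x + f x) y = jprod x (f y + f y)"
      using m[of x y] by (simp add: jprod_def algebra_simps)
    hence E: "(?a*x+x*?a)*y + y*(?a*x+x*?a) = x*(?a*y+y*?a) + (?a*y+y*?a)*x"
      using d[of y] d[of x] by (simp add: jprod_def)
    have "comm ?a (comm x y) = (?a*x+x*?a)*y + y*(?a*x+x*?a) - (x*(?a*y+y*?a) + (?a*y+y*?a)*x)"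
      by (simp add: comm_def algebra_simps)
    thus "comm ?a (comm x y) = 0" using E by simp
  qed
qed

lemma central_to_cent:
  fixes smult :: "'k::field \<Rightarrow> 'a::ring_1 \<Rightarrow> 'a"
  assumes ua: "unital_algebra smult" and two: "(2::'k) \<noteq> 0"
    and l: "Vector_Spaces.linear smult smult f"
    and d: "\<And>z. f z + f z = a * z + z * a" and c: "a \<in> center"
  shows "f \<in> Cent smult"
proof -
  have ac: "a * z = z * a" for z using c unfolding center_def comm_def by auto
  have fz: "f z = a * z" for z
    using tf2[OF ua two, of "f z" "a * z"] d[of z] ac[of z] by simp
  show ?thesis unfolding Cent_def using l fz ac
    by (simp add: mult.assoc)
qed

theorem corollary3p2:
  fixes smult :: "'k::field \<Rightarrow> 'a::ring_1 \<Rightarrow> 'a"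
  assumes "unital_algebra smult"
    and "(2::'k) \<noteq> 0"
  shows "(ZJ = (center :: 'a set) \<longrightarrow> JCent smult = Cent smult)
       \<and> (ZQ = (center :: 'a set) \<longrightarrow> QJCent smult = Cent smult)
       \<and> (ZQ = (ZJ :: 'a set) \<longrightarrow> QJCent smult = JCent smult)"
proof (intro conjI impI)
  assume h: "ZJ = (center :: 'a set)"
  show "JCent smult = Cent smult"
  proof
    show "JCent smult \<subseteq> Cent smult"
    proof
      fix f assume f: "f \<in> JCent smult"
      have l: "Vector_Spaces.linear smult smult f" using f unfolding JCent_def by auto
      show "f \<in> Cent smult"
        by (rule central_to_cent[OF assms l J_basic(1)[OF f]]) (use J_basic(2)[OF f] h in simp)
    qed
  qed (rule cent_sub_J)
next
  assume h: "ZQ = (center :: 'a set)"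
  show "QJCent smult = Cent smult"
  proof
    show "QJCent smult \<subseteq> Cent smult"
    proof
      fix f assume f: "f \<in> QJCent smult"
      have l: "Vector_Spaces.linear smult smult f" using f unfolding QJCent_def by auto
      show "f \<in> Cent smult"
        by (rule central_to_cent[OF assms l Q_basic(1)[OF f]]) (use Q_basic(2)[OF f] h in simp)
    qed
  qed (rule cent_sub_Q)
next
  assume h: "ZQ = (ZJ :: 'a set)"
  show "QJCent smult = JCent smult"
  proof
    show "QJCent smult \<subseteq> JCent smult"
    proof
      fix f assume f: "f \<in> QJCent smult"
      have l: "Vector_Spaces.linear smult smult f" using f unfolding QJCent_def by auto
      let ?a = "f 1"
      have d: "\<And>z. f z + f z = ?a * z + z * ?a" by (rule Q_basic(1)[OF f])
      have aJ: "?a \<in> ZJ" using Q_basic(2)[OF f] h by simp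
      have "f (jprod x y) = jprod (f x) y" for x y
      proof -
        have z: "comm (comm ?a y) x = 0" using aJ unfolding ZJ_def by simp
        have "(f (jprod x y) - jprod (f x) y) + (f (jprod x y) - jprod (f x) y)
              = (f (jprod x y) + f (jprod x y)) - jprod (f x + f x) y"
          by (simp add: jprod_def algebra_simps)
        also have "\<dots> = comm (comm ?a y) x"
          unfolding d by (simp add: jprod_def comm_def algebra_simps)
        finally have "f (jprod x y) - jprod (f x) y = 0" using tf[OF assms, of "f (jprod x y) - jprod (f x) y"] z by simp
        thus ?thesis by simp
      qed
      thus "f \<in> JCent smult" unfolding JCent_def using l by auto
    qed
  next
    show "JCent smult \<subseteq> QJCent smult"
    proof
      fix f assume f: "f \<in> JCent smult"
      have l: "Vector_Spaces.linear smult smult f" using f unfolding JCent_def by auto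
      let ?a = "f 1"
      have d: "\<And>z. f z + f z = ?a * z + z * ?a" by (rule J_basic(1)[OF f])
      have aQ: "?a \<in> ZQ" using J_basic(2)[OF f] h by simp
      have "jprod (f x) y = jprod x (f y)" for x y
      proof -
        have z: "comm ?a (comm x y) = 0" using aQ unfolding ZQ_def by simp
        have "(jprod (f x) y - jprod x (f y)) + (jprod (f x) y - jprod x (f y))
              = jprod (f x + f x) y - jprod x (f y + f y)"
          by (simp add: jprod_def algebra_simps)
        also have "\<dots> = comm ?a (comm x y)"
          unfolding d by (simp add: jprod_def comm_def algebra_simps)
        finally have "jprod (f x) y - jprod x (f y) = 0" using tf[OF assms, of "jprod (f x) y - jprod x (f y)"] z by simp
        thus ?thesis by simp
      qed
      thus "f \<in> QJCent smult" unfolding QJCent_def using l by auto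
    qed
  qed
qed

end
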